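(* Let $\sigma:[0,\infty)\to[0,\infty)$ be nondecreasing with $\lim_{t\to\infty}\sigma(t)=\infty$. If $\gamma(\sigma)>1$, then $\gamma(\sigma)=\gamma((\sigma^{\star})^{\iota})+1$.
   Context: Upper Legendre conjugate: $\sigma^{\star}(s):=\sup_{t\ge0}\{\sigma(t)-st\}$ for $s>0$; $(\sigma^{\star})^{\iota}(t):=\sigma^{\star}(1/t)$ for $t>0$. For a nondecreasing function $\sigma$ tending to $\infty$ and $\gamma>0$, $(P_{\sigma,\gamma})$ holds if there is $K>1$ with $\limsup_{t\to\infty}\sigma(K^{\gamma}t)/\sigma(t)<K$; $\gamma(\sigma):=\sup\{\gamma>0:(P_{\sigma,\gamma})\text{ holds}\}$, and $:=0$ if none holds. *)

theory Defs
  imports "HOL-Analysis.Analysis" "HOL-Library.Liminf_Limsup"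
begin

definition sigma_star :: "(real \<Rightarrow> real) \<Rightarrow> real \<Rightarrow> real" where
  "sigma_star \<sigma> s = (SUP t\<in>{0..}. \<sigma> t - s * t)"

definition sigma_star_iota :: "(real \<Rightarrow> real) \<Rightarrow> real \<Rightarrow> real" where
  "sigma_star_iota \<sigma> t = sigma_star \<sigma> (1 / t)"

definition P_prop :: "(real \<Rightarrow> real) \<Rightarrow> real \<Rightarrow> bool" where
  "P_prop \<sigma> \<gamma> \<longleftrightarrow>
     (\<exists>K>1. Limsup at_top (\<lambda>t. ereal (\<sigma> (K powr \<gamma> * t) / \<sigma> t)) < ereal K)"

definition gamma_idx :: "(real \<Rightarrow> real) \<Rightarrow> ereal" where
  "gamma_idx \<sigma> = (if \<exists>\<gamma>>0. P_prop \<sigma> \<gamma>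
                    then Sup (ereal ` {\<gamma>. \<gamma> > 0 \<and> P_prop \<sigma> \<gamma>}) else 0)"

end

theory Submission
  imports Defs
begin


definition Qp :: "(real \<Rightarrow> real) \<Rightarrow> real \<Rightarrow> bool" where
  "Qp f a \<longleftrightarrow> (\<exists>C\<ge>1. \<exists>T>0. \<forall>t\<ge>T. f t > 0 \<and> (\<forall>l\<ge>1. f (l * t) \<le> C * l powr a * f t))"

lemma Q_imp_P:
  assumes Q: "Qp f a" and a: "a \<ge> 0" and ag: "a * g < 1" and g: "g > 0"
  shows "P_prop f g"
proof -
  obtain C T where C: "C \<ge> 1" and T: "T > 0"
    and H: "\<forall>t\<ge>T. f t > 0 \<and> (\<forall>l\<ge>1. f (l * t) \<le> C * l powr a * f t)"
    using Q unfolding Qp_def by blast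
  define K where "K = (2 * C) powr (1 / (1 - a * g))"
  have e: "1 - a * g > 0" using ag by simp
  have K1: "K > 1" unfolding K_def using C e
    by (simp add: gr_one_powr)
  have KK: "K powr (1 - a * g) = 2 * C" unfolding K_def using C e
    by (simp add: powr_powr)
  have Kid: "K powr (1 - a*g) * K powr (a * g) = K" using K1
    by (simp add: powr_add[symmetric])
  then have Kbig: "C * K powr (a * g) < K" using KK C K1
  proof -
    have "C * K powr (a*g) < 2 * C * K powr (a*g)" using C K1 by simp
    also have "\<dots> = K powr (1 - a*g) * K powr (a*g)" using KK by simp
    also have "\<dots> = K" using Kid by simp
    finally show ?thesis .
  qed
  have Kg1: "K powr g \<ge> 1" using K1 g by (simp add: ge_one_powr_ge_zero)
  have ev: "eventually (\<lambda>t. ereal (f (K powr g * t) / f t) \<le> ereal (C * K powr (a * g))) at_top"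
    unfolding eventually_at_top_linorder
  proof (intro exI allI impI)
    fix t assume t: "t \<ge> T"
    have ft: "f t > 0" using H t by blast
    have "f (K powr g * t) \<le> C * (K powr g) powr a * f t" using H t Kg1 by blast
    also have "(K powr g) powr a = K powr (a * g)" by (simp add: powr_powr mult.commute)
    finally show "ereal (f (K powr g * t) / f t) \<le> ereal (C * K powr (a * g))"
      using ft by (simp add: divide_le_eq)
  qed
  have "Limsup at_top (\<lambda>t. ereal (f (K powr g * t) / f t)) \<le> ereal (C * K powr (a * g))"
    by (rule Limsup_bounded[OF ev])
  also have "\<dots> < ereal K" using Kbig by simp
  finally show ?thesis unfolding P_prop_def using K1 by blast
qed


lemma P_imp_Q:
  assumes mono: "mono_on {T0..} f" and pos: "\<forall>t\<ge>T0. f t > 0" and T0: "T0 \<ge> 0"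
    and g: "g > 0" and P: "P_prop f g"
  shows "\<exists>a\<ge>0. a * g < 1 \<and> Qp f a"
proof -
  obtain K where K1: "K > 1" and LK: "Limsup at_top (\<lambda>t. ereal (f (K powr g * t) / f t)) < ereal K"
    using P unfolding P_prop_def by blast
  obtain z where z1: "Limsup at_top (\<lambda>t. ereal (f (K powr g * t) / f t)) < z" and z2: "z < ereal K"
    using dense[OF LK] by blast
  have "z \<noteq> -\<infinity>" using z1 by auto
  moreover have "z \<noteq> \<infinity>" using z2 by auto
  ultimately obtain L where zL: "z = ereal L" by (cases z) auto
  have LK': "L < K" using z2 zL by simp
  have "eventually (\<lambda>t. ereal (f (K powr g * t) / f t) < z) at_top"
    using Limsup_lessD[OF z1] .
  then obtain T1 where T1: "\<And>t. t \<ge> T1 \<Longrightarrow> f (K powr g * t) / f t < L"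
    unfolding eventually_at_top_linorder zL by auto
  define T where "T = max T1 (max T0 1)"
  define D where "D = K powr g"
  define L1 where "L1 = max L 1"
  have D1: "D > 1" unfolding D_def using K1 g by simp
  have L1K: "L1 < K" unfolding L1_def using LK' K1 by simp
  have L11: "L1 \<ge> 1" unfolding L1_def by simp
  have T: "T \<ge> T0" "T \<ge> T1" "T \<ge> 1" unfolding T_def by auto
  have step: "f (D * t) \<le> L1 * f t" if t: "t \<ge> T" for t
  proof -
    have "f t > 0" using pos t T by simp
    moreover have "f (D * t) / f t < L" using T1[of t] t T unfolding D_def by simp
    ultimately have "f (D * t) < L * f t" by (simp add: divide_less_eq)
    moreover have "L * f t \<le> L1 * f t" using \<open>f t > 0\<close> unfolding L1_def
      by (simp add: mult_right_mono)
    ultimately show ?thesis by simp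
  qed
  have iter: "f (D ^ n * t) \<le> L1 ^ n * f t" if "t \<ge> T" for n t
    using that
  proof (induction n arbitrary: t)
    case 0 then show ?case by simp
  next
    case (Suc n)
    have Dt: "D * t \<ge> T" using Suc.prems D1 T
      by (smt (verit, best) mult_le_cancel_right1)
    have "f (D ^ Suc n * t) = f (D ^ n * (D * t))" by (simp only: power_Suc2 mult.assoc)
    also have "\<dots> \<le> L1 ^ n * f (D * t)" using Suc.IH[OF Dt] .
    also have "\<dots> \<le> L1 ^ n * (L1 * f t)" using step[OF Suc.prems] L11
      by (simp add: mult_left_mono)
    finally show ?case by (simp add: mult.assoc mult.commute mult.left_commute)
  qed
  define a where "a = ln L1 / (g * ln K)"
  have lnK: "ln K > 0" using K1 by simp
  have lnL: "ln L1 \<ge> 0" using L11 by simp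
  have lnD: "ln D = g * ln K" unfolding D_def using K1 by (simp add: ln_powr)
  have a0: "a \<ge> 0" unfolding a_def using lnK lnL g by simp
  have "ln L1 < ln K" using L1K L11 by simp
  then have ag: "a * g < 1" unfolding a_def using lnK g by (simp add: divide_less_eq)
  have main: "f t > 0 \<and> f (l * t) \<le> L1 * l powr a * f t" if t: "t \<ge> T" and l: "l \<ge> 1" for t l
  proof
    show "f t > 0" using pos t T by simp
    define n where "n = nat \<lfloor>ln l / ln D\<rfloor>"
    have lnD0: "ln D > 0" using D1 by simp
    have x0: "ln l / ln D \<ge> 0" using l lnD0 by simp
    have n1: "real n \<le> ln l / ln D" unfolding n_def using x0 by linarith
    have n2: "ln l / ln D < real n + 1" unfolding n_def using x0 by linarith
    have "ln l < (real n + 1) * ln D" using n2 lnD0 by (simp add: divide_less_eq)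
    then have "l < D ^ (n+1)" using l D1
      by (metis exp_less_cancel_iff exp_ln less_le_trans ln_realpow zero_less_one add.commute
          of_nat_Suc Suc_eq_plus1 dual_order.strict_trans2 exp_gt_zero ln_less_cancel_iff
          order_less_imp_le zero_less_power)
    then have "l * t \<le> D ^ (n+1) * t" using t T by simp
    moreover have "l * t \<ge> T0" using l t T
      by (smt (verit, best) mult_le_cancel_right1)
    moreover have "D ^ (n+1) * t \<ge> T0" using calculation by simp
    ultimately have "f (l * t) \<le> f (D ^ (n+1) * t)"
      using mono by (auto intro: mono_onD)
    also have "\<dots> \<le> L1 ^ (n+1) * f t" using iter t by blast
    also have "L1 ^ n \<le> l powr a"
    proof -
      have "L1 ^ n = exp (real n * ln L1)" using L11 by (simp add: exp_of_nat_mult)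
      also have "real n * ln L1 = a * (real n * ln D)" unfolding a_def lnD using lnK g by simp
      also have "real n * ln D \<le> ln l" using n1 lnD0 by (simp add: le_divide_eq)
      then have "exp (a * (real n * ln D)) \<le> exp (a * ln l)" using a0
        by (simp add: mult_left_mono)
      also have "exp (a * ln l) = l powr a" using l by (simp add: powr_def)
      finally show ?thesis .
    qed
    then have "L1 ^ (n+1) * f t \<le> L1 * l powr a * f t" using \<open>f t > 0\<close> L11
      by (simp add: mult_left_mono mult_right_mono mult.commute)
    finally show "f (l * t) \<le> L1 * l powr a * f t" .
  qed
  have "Qp f a" unfolding Qp_def using main L11 T
    by (intro exI[of _ L1] conjI exI[of _ T]) auto
  then show ?thesis using a0 ag by blast
qed


lemma fin_lemma:
  fixes \<sigma> :: "real \<Rightarrow> real"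
  assumes nonneg: "\<forall>t\<ge>0. \<sigma> t \<ge> 0" and mono: "mono_on {0..} \<sigma>"
    and Q: "Qp \<sigma> a" and a0: "a \<ge> 0" and a1: "a < 1" and t: "t > 0"
  shows "bdd_above ((\<lambda>u. \<sigma> u - u / t) ` {0..})"
proof -
  obtain C T where C: "C \<ge> 1" and T: "T > 0"
    and H: "\<forall>t\<ge>T. \<sigma> t > 0 \<and> (\<forall>l\<ge>1. \<sigma> (l * t) \<le> C * l powr a * \<sigma> t)"
    using Q unfolding Qp_def by blast
  define B where "B = C * \<sigma> T / T powr a"
  have B0: "B \<ge> 0" unfolding B_def using C nonneg T by simp
  have bnd: "\<sigma> u \<le> \<sigma> T + B * u powr a" if u: "u \<ge> 0" for u
  proof (cases "u \<le> T")
    case True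
    then have "\<sigma> u \<le> \<sigma> T" using mono u T by (auto intro: mono_onD)
    moreover have "B * u powr a \<ge> 0" using B0 by simp
    ultimately show ?thesis by simp
  next
    case False
    then have l: "u / T \<ge> 1" using T by simp
    have "\<sigma> u = \<sigma> ((u / T) * T)" using T by simp
    also have "\<dots> \<le> C * (u / T) powr a * \<sigma> T" using H l T by (meson order_refl)
    also have "\<dots> = B * u powr a" unfolding B_def using T u by (simp add: powr_divide)
    finally have "\<sigma> u \<le> B * u powr a" .
    moreover have "\<sigma> T \<ge> 0" using nonneg T by simp
    ultimately show ?thesis by linarith
  qed
  define R where "R = (B * t) powr (1 / (1 - a))"
  have R0: "R \<ge> 0" unfolding R_def by simp
  have RB: "R powr (1 - a) = B * t" unfolding R_def using a1 B0 t by (simp add: powr_powr)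
  have key: "B * u powr a - u / t \<le> B * R powr a" if u: "u \<ge> 0" for u
  proof (cases "u \<le> R")
    case True
    then have "u powr a \<le> R powr a" using u a0 by (simp add: powr_mono2)
    then have "B * u powr a \<le> B * R powr a" using B0 by (simp add: mult_left_mono)
    moreover have "u / t \<ge> 0" using u t by simp
    ultimately show ?thesis by simp
  next
    case False
    then have up: "u > 0" using R0 by simp
    have "R powr (1 - a) \<le> u powr (1 - a)" using False R0 a1 by (simp add: powr_mono2)
    then have "B * t \<le> u powr (1 - a)" using RB by simp
    then have "u powr a * (B * t) \<le> u powr a * u powr (1 - a)" by (simp add: mult_left_mono)
    also have "\<dots> = u" using up by (simp add: powr_add[symmetric])
    finally have "B * u powr a \<le> u / t" using t by (simp add: le_divide_eq mult_ac)
    moreover have "B * R powr a \<ge> 0" using B0 by simp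
    ultimately show ?thesis by simp
  qed
  show ?thesis
  proof (rule bdd_aboveI2)
    fix u :: real assume "u \<in> {0..}"
    then have u: "u \<ge> 0" by simp
    show "\<sigma> u - u / t \<le> \<sigma> T + B * R powr a" using bnd[OF u] key[OF u] by simp
  qed
qed


context
  fixes \<sigma> :: "real \<Rightarrow> real"
  assumes nonneg: "\<forall>t\<ge>0. \<sigma> t \<ge> 0" and mono: "mono_on {0..} \<sigma>"
    and lim: "filterlim \<sigma> at_top at_top"
    and fin: "\<forall>t>0. bdd_above ((\<lambda>u. \<sigma> u - u / t) ` {0..})"
begin

lemma om_eq: "sigma_star_iota \<sigma> t = (SUP u\<in>{0..}. \<sigma> u - u / t)"
  unfolding sigma_star_iota_def sigma_star_def by simp

lemma om_ge: "t > 0 \<Longrightarrow> u \<ge> 0 \<Longrightarrow> \<sigma> u - u / t \<le> sigma_star_iota \<sigma> t"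
  unfolding om_eq using fin by (intro cSUP_upper) auto

lemma om_le: "(\<And>u. u \<ge> 0 \<Longrightarrow> \<sigma> u - u / t \<le> M) \<Longrightarrow> sigma_star_iota \<sigma> t \<le> M"
  unfolding om_eq by (rule cSUP_least) auto

lemma om_mono: "0 < t \<Longrightarrow> t \<le> t' \<Longrightarrow> sigma_star_iota \<sigma> t \<le> sigma_star_iota \<sigma> t'"
proof (rule om_le)
  fix u :: real assume t: "0 < t" "t \<le> t'" and u: "u \<ge> 0"
  have "u / t' \<le> u / t" using t u by (simp add: frac_le)
  moreover have "\<sigma> u - u / t' \<le> sigma_star_iota \<sigma> t'" using t u by (intro om_ge) auto
  ultimately show "\<sigma> u - u / t \<le> sigma_star_iota \<sigma> t'" by simp
qed

lemma om_nonneg: "t > 0 \<Longrightarrow> sigma_star_iota \<sigma> t \<ge> 0"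
  using om_ge[of t 0] nonneg by (smt (verit) div_0 order_refl)

lemma om_big: "\<exists>T>0. \<forall>t\<ge>T. sigma_star_iota \<sigma> t \<ge> M"
proof -
  have "eventually (\<lambda>u. \<sigma> u \<ge> M + 1) at_top" using lim by (simp add: filterlim_at_top)
  then obtain U where U: "\<And>u. u \<ge> U \<Longrightarrow> \<sigma> u \<ge> M + 1"
    unfolding eventually_at_top_linorder by auto
  define u where "u = max U 0"
  have u: "u \<ge> 0" "\<sigma> u \<ge> M + 1" using U unfolding u_def by auto
  show ?thesis
  proof (intro exI[of _ "max u 1"] conjI allI impI)
    fix t assume t: "max u 1 \<le> t"
    then have "u / t \<le> 1" using u by simp
    moreover have "\<sigma> u - u / t \<le> sigma_star_iota \<sigma> t" using t u by (intro om_ge) auto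
    ultimately show "sigma_star_iota \<sigma> t \<ge> M" using u by simp
  qed simp
qed


lemma lemA:
  assumes Q: "Qp \<sigma> a" and a0: "a \<ge> 0" and a1: "a < 1"
  shows "Qp (sigma_star_iota \<sigma>) (a / (1 - a))"
proof -
  obtain C T where C: "C \<ge> 1" and T: "T > 0"
    and H: "\<forall>t\<ge>T. \<sigma> t > 0 \<and> (\<forall>l\<ge>1. \<sigma> (l * t) \<le> C * l powr a * \<sigma> t)"
    using Q unfolding Qp_def by blast
  define b where "b = a / (1 - a)"
  obtain T' where T'0: "T' > 0" and T': "\<forall>t\<ge>T'. sigma_star_iota \<sigma> t \<ge> \<sigma> T + 1"
    using om_big by blast
  define C' where "C' = C * C powr b"
  have b0: "b \<ge> 0" unfolding b_def using a0 a1 by simp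
  have "C powr b \<ge> 1" using C b0 by (rule ge_one_powr_ge_zero)
  then have C'1: "C' \<ge> 1" unfolding C'_def using mult_mono[of 1 C 1 "C powr b"] C by simp
  have main: "sigma_star_iota \<sigma> t > 0 \<and> sigma_star_iota \<sigma> (l * t) \<le> C' * l powr b * sigma_star_iota \<sigma> t"
    if t: "t \<ge> T'" and l: "l \<ge> 1" for t l
  proof
    have sT: "\<sigma> T \<ge> 0" using nonneg T by simp
    have omt: "sigma_star_iota \<sigma> t \<ge> \<sigma> T + 1" using T' t by simp
    then show "sigma_star_iota \<sigma> t > 0" using sT by simp
    have tp: "t > 0" using t T'0 by simp
    define \<mu> where "\<mu> = (C * l) powr (1 / (1 - a))"
    have Cl: "C * l \<ge> 1" using mult_mono[of 1 C 1 l] C l by simp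
    have mu1: "\<mu> \<ge> 1" unfolding \<mu>_def using Cl a1 by (simp add: ge_one_powr_ge_zero)
    have mua: "\<mu> powr a = (C * l) powr b" unfolding \<mu>_def b_def by (simp add: powr_powr)
    have mu1a: "\<mu> powr (1 - a) = C * l" unfolding \<mu>_def using a1 Cl by (simp add: powr_powr)
    have muid: "\<mu> = C * l * \<mu> powr a"
    proof -
      have "\<mu> = \<mu> powr a * \<mu> powr (1 - a)" using mu1 by (simp add: powr_add[symmetric])
      then show ?thesis using mu1a by (simp add: mult_ac)
    qed
    have Cmu: "C * \<mu> powr a = C' * l powr b" unfolding mua C'_def using C l
      by (simp add: powr_mult)
    define M where "M = C * \<mu> powr a"
    have M0: "M \<ge> 0" unfolding M_def using C by simp
    have "sigma_star_iota \<sigma> (l * t) \<le> M * sigma_star_iota \<sigma> t"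
    proof (rule om_le)
      fix u :: real assume u: "u \<ge> 0"
      have lt: "l * t > 0" using l tp by simp
      show "\<sigma> u - u / (l * t) \<le> M * sigma_star_iota \<sigma> t"
      proof (cases "u / \<mu> \<ge> T")
        case True
        define v where "v = u / \<mu>"
        have uv: "u = \<mu> * v" unfolding v_def using mu1 by simp
        have v0: "v \<ge> 0" using True T unfolding v_def by simp
        have "\<sigma> u \<le> C * \<mu> powr a * \<sigma> v" unfolding uv using H True mu1 unfolding v_def by blast
        moreover have "u / (l * t) = M * (v / t)"
        proof -
          have "u / (l * t) = \<mu> * v / (l * t)" using uv by simp
          also have "\<dots> = (C * l * \<mu> powr a) * v / (l * t)" using muid by metis
          also have "\<dots> = M * (v / t)" unfolding M_def using l tp by (simp add: field_simps)
          finally show ?thesis .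
        qed
        ultimately have "\<sigma> u - u / (l * t) \<le> M * (\<sigma> v - v / t)" unfolding M_def
          by (simp add: right_diff_distrib)
        also have "\<dots> \<le> M * sigma_star_iota \<sigma> t"
          using om_ge[OF tp v0] M0 by (simp add: mult_left_mono)
        finally show ?thesis .
      next
        case False
        then have "u / \<mu> \<le> T" by simp
        then have "u \<le> \<mu> * T" using mu1 by (simp add: divide_le_eq mult.commute)
        then have "\<sigma> u \<le> \<sigma> (\<mu> * T)" using mono u by (auto intro: mono_onD)
        also have "\<dots> \<le> M * \<sigma> T" unfolding M_def using H T mu1 by auto
        also have "\<dots> \<le> M * sigma_star_iota \<sigma> t" using omt M0 by (simp add: mult_left_mono)
        finally show ?thesis using u lt by (smt (verit) divide_nonneg_pos)
      qed
    qed
    then show "sigma_star_iota \<sigma> (l * t) \<le> C' * l powr b * sigma_star_iota \<sigma> t"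
      unfolding M_def Cmu .
  qed
  show ?thesis unfolding Qp_def b_def[symmetric] using main C'1 T'0
    by (intro exI[of _ C'] conjI exI[of _ T']) auto
qed


lemma lemB:
  assumes Q: "Qp (sigma_star_iota \<sigma>) b" and b0: "b \<ge> 0"
  shows "Qp \<sigma> (b / (1 + b))"
proof -
  let ?w = "sigma_star_iota \<sigma>"
  obtain C T where C: "C \<ge> 1" and T: "T > 0"
    and H: "\<forall>t\<ge>T. ?w t > 0 \<and> (\<forall>l\<ge>1. ?w (l * t) \<le> C * l powr b * ?w t)"
    using Q unfolding Qp_def by blast
  define c1 where "c1 = 2 * C * 2 powr b"
  have c1: "c1 > 0" unfolding c1_def using C by simp
  define g where "g t = c1 * t * ?w t" for t
  have claim1: "?w t \<le> \<sigma> u" if t: "t \<ge> T" and u: "u \<ge> 0" and gu: "g t \<le> u" for t u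
  proof (rule om_le)
    fix v :: real assume v: "v \<ge> 0"
    have tp: "t > 0" using t T by simp
    show "\<sigma> v - v / t \<le> \<sigma> u"
    proof (cases "v \<le> u")
      case True
      then have "\<sigma> v \<le> \<sigma> u" using mono v by (auto intro: mono_onD)
      moreover have "v / t \<ge> 0" using v tp by simp
      ultimately show ?thesis by simp
    next
      case False
      have t2: "2 * t > 0" using tp by simp
      have a1: "\<sigma> v - v / (2 * t) \<le> ?w (2 * t)" using om_ge[OF t2 v] .
      have a2: "?w (2 * t) \<le> C * 2 powr b * ?w t" using H t by simp
      have a3: "v / t = v / (2 * t) + v / (2 * t)" by simp
      have a4: "u / (2 * t) \<le> v / (2 * t)" using False t2 by (simp add: divide_right_mono)
      have a5: "g t / (2 * t) \<le> u / (2 * t)" using gu t2 by (simp add: divide_right_mono)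
      have a6: "g t / (2 * t) = C * 2 powr b * ?w t" unfolding g_def c1_def using tp by simp
      have "\<sigma> u \<ge> 0" using nonneg u by simp
      then show ?thesis using a1 a2 a3 a4 a5 a6 by linarith
    qed
  qed
  have wT: "?w T > 0" using H T by simp
  have claim2: "\<exists>t\<ge>T. g t \<le> u \<and> u < g (4 * t)" if u: "u \<ge> g T" for u
  proof -
    define S where "S = {t. T \<le> t \<and> g t \<le> u}"
    have TS: "T \<in> S" unfolding S_def using u by simp
    have bdd: "bdd_above S"
    proof (rule bdd_aboveI[where M="u / (c1 * ?w T)"])
      fix t assume "t \<in> S"
      then have t: "T \<le> t" "g t \<le> u" unfolding S_def by auto
      have "?w T \<le> ?w t" using om_mono T t by simp
      then have "c1 * t * ?w T \<le> g t" unfolding g_def using c1 t T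
        by (simp add: mult_left_mono)
      then have "t * (c1 * ?w T) \<le> u" using t by (simp add: mult_ac)
      then show "t \<le> u / (c1 * ?w T)" using c1 wT by (simp add: le_divide_eq)
    qed
    define s where "s = Sup S"
    have sT: "T \<le> s" unfolding s_def using TS bdd by (rule cSup_upper)
    have "s / 2 < Sup S" using sT T unfolding s_def by simp
    moreover have "S \<noteq> {}" using TS by auto
    ultimately obtain t where tS: "t \<in> S" and ts: "s / 2 < t" using less_cSupE by blast
    have t: "T \<le> t" "g t \<le> u" using tS unfolding S_def by auto
    have "g (4 * t) > u"
    proof (rule ccontr)
      assume "\<not> g (4 * t) > u"
      then have "4 * t \<in> S" unfolding S_def using t T by simp
      then have "4 * t \<le> s" unfolding s_def using bdd by (rule cSup_upper)
      then show False using ts sT T by simp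
    qed
    then show ?thesis using t by blast
  qed
  define a where "a = b / (1 + b)"
  define c2 where "c2 = c1 * 4 * C * 4 powr b"
  define U where "U = max (g T) 1"
  have c2: "c2 > 0" unfolding c2_def using C c1 by (simp add: mult_pos_pos)
  have main: "\<sigma> u > 0 \<and> \<sigma> (l * u) \<le> (C + c2) * l powr a * \<sigma> u" if u: "u \<ge> U" and l: "l \<ge> 1" for u l
  proof -
    obtain t where t: "t \<ge> T" and gt: "g t \<le> u" and ug: "u < g (4 * t)"
      using claim2[of u] u unfolding U_def by auto
    have tp: "t > 0" using t T by simp
    have u0: "u \<ge> 0" using u unfolding U_def by simp
    have wt: "?w t > 0" using H t by simp
    have ws: "?w t \<le> \<sigma> u" using claim1[OF t u0 gt] .
    have su: "\<sigma> u > 0" using wt ws by simp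
    have "?w (4 * t) \<le> C * 4 powr b * ?w t" using H t by simp
    then have "g (4 * t) \<le> c1 * (4 * t) * (C * 4 powr b * ?w t)" unfolding g_def using c1 tp
      by (simp add: mult_left_mono)
    also have "\<dots> = c2 * t * ?w t" unfolding c2_def by (simp add: mult_ac)
    finally have uc: "u \<le> c2 * t * ?w t" using ug by simp
    define \<mu> where "\<mu> = l powr (1 / (1 + b))"
    have mu1: "\<mu> \<ge> 1" unfolding \<mu>_def using l b0 by (simp add: ge_one_powr_ge_zero)
    have mub: "\<mu> powr b = l powr a" unfolding \<mu>_def a_def by (simp add: powr_powr)
    have lmu: "l = \<mu> * l powr a"
    proof -
      have "\<mu> * l powr a = l powr (1 / (1 + b) + b / (1 + b))" unfolding \<mu>_def a_def
        by (simp add: powr_add)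
      also have "1 / (1 + b) + b / (1 + b) = 1" using b0 by (simp add: field_simps)
      finally show ?thesis using l by simp
    qed
    have mt: "\<mu> * t > 0" using mu1 tp by simp
    have lu: "l * u \<ge> 0" using l u0 by simp
    have "\<sigma> (l * u) \<le> ?w (\<mu> * t) + l * u / (\<mu> * t)" using om_ge[OF mt lu] by simp
    also have "?w (\<mu> * t) \<le> C * l powr a * ?w t" using H t mu1 mub by metis
    also have "l * u / (\<mu> * t) = l powr a * u / t"
    proof -
      have "l * u / (\<mu> * t) = (\<mu> * l powr a) * u / (\<mu> * t)" using lmu by metis
      also have "\<dots> = l powr a * u / t" using mu1 tp by (simp add: field_simps)
      finally show ?thesis .
    qed
    also have "l powr a * u / t \<le> l powr a * (c2 * ?w t)"
    proof -
      have "u / t \<le> c2 * ?w t" using uc tp by (simp add: divide_le_eq mult_ac)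
      then have "l powr a * (u / t) \<le> l powr a * (c2 * ?w t)" by (rule mult_left_mono) simp
      then show ?thesis by (metis times_divide_eq_right)
    qed
    finally have "\<sigma> (l * u) \<le> (C + c2) * l powr a * ?w t" by (simp add: algebra_simps)
    also have "\<dots> \<le> (C + c2) * l powr a * \<sigma> u"
    proof (rule mult_left_mono[OF ws])
      show "0 \<le> (C + c2) * l powr a" using C c2 by simp
    qed
    finally show ?thesis using su by simp
  qed
  have C1: "C + c2 \<ge> 1" using C c2 by simp
  have U0: "U > 0" unfolding U_def by simp
  show ?thesis unfolding Qp_def a_def[symmetric] using main C1 U0
    by (intro exI[of _ "C + c2"] conjI exI[of _ U]) auto
qed

end


theorem corollary2p25:
  fixes \<sigma> :: "real \<Rightarrow> real"
  assumes nonneg: "\<forall>t\<ge>0. \<sigma> t \<ge> 0"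
    and mono: "mono_on {0..} \<sigma>"
    and lim: "filterlim \<sigma> at_top at_top"
    and gt1: "gamma_idx \<sigma> > 1"
  shows "gamma_idx \<sigma> = gamma_idx (sigma_star_iota \<sigma>) + 1"
proof -
  let ?w = "sigma_star_iota \<sigma>"
  define S1 where "S1 = {\<gamma>. \<gamma> > 0 \<and> P_prop \<sigma> \<gamma>}"
  define S2 where "S2 = {\<gamma>. \<gamma> > 0 \<and> P_prop ?w \<gamma>}"
  have "eventually (\<lambda>u. \<sigma> u \<ge> 1) at_top" using lim by (simp add: filterlim_at_top)
  then obtain U where U: "\<And>u. u \<ge> U \<Longrightarrow> \<sigma> u \<ge> 1"
    unfolding eventually_at_top_linorder by auto
  define T0 where "T0 = max U 0"
  have T0: "T0 \<ge> 0" "\<forall>t\<ge>T0. \<sigma> t > 0" using U unfolding T0_def by force+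
  have monoT0: "mono_on {T0..} \<sigma>" using mono T0 by (auto intro: mono_on_subset)
  have ex1: "\<exists>\<gamma>>0. P_prop \<sigma> \<gamma>"
  proof (rule ccontr)
    assume "\<not> ?thesis"
    then have "gamma_idx \<sigma> = 0" unfolding gamma_idx_def by auto
    then show False using gt1 by simp
  qed
  then have g1: "gamma_idx \<sigma> = Sup (ereal ` S1)" unfolding gamma_idx_def S1_def by simp
  then obtain x where xS: "x \<in> S1" and x1: "1 < ereal x" using gt1 by (auto simp: less_SUP_iff)
  have x1': "x > 1" using x1 by simp
  obtain a0 where a0: "a0 \<ge> 0" "a0 * x < 1" "Qp \<sigma> a0"
    using P_imp_Q[OF monoT0 T0(2) T0(1)] xS unfolding S1_def by blast
  have a01: "a0 < 1" using a0 x1' by (smt (verit) mult_le_cancel_left1)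
  have fin: "\<forall>t>0. bdd_above ((\<lambda>u. \<sigma> u - u / t) ` {0..})"
    using fin_lemma[OF nonneg mono a0(3) a0(1) a01] by blast
  obtain T1 where T1: "T1 > 0" "\<forall>t\<ge>T1. ?w t \<ge> 1"
    using om_big[OF nonneg mono lim fin, of 1] by blast
  have wpos: "\<forall>t\<ge>T1. ?w t > 0" using T1 by force
  have wmono: "mono_on {T1..} ?w"
    by (rule mono_onI) (use T1 om_mono[OF nonneg mono lim fin] in auto)
  have equiv: "P_prop ?w g \<longleftrightarrow> P_prop \<sigma> (g + 1)" if g: "g > 0" for g
  proof
    assume "P_prop ?w g"
    then obtain b where b: "b \<ge> 0" "b * g < 1" "Qp ?w b"
      using P_imp_Q[OF wmono wpos] T1 g by (meson less_imp_le)
    have Q: "Qp \<sigma> (b / (1 + b))" using lemB[OF nonneg mono lim fin b(3) b(1)] .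
    have "b / (1 + b) * (g + 1) < 1" using b by (simp add: field_simps)
    then show "P_prop \<sigma> (g + 1)" using Q_imp_P[OF Q] b g by simp
  next
    assume "P_prop \<sigma> (g + 1)"
    then obtain a where a: "a \<ge> 0" "a * (g + 1) < 1" "Qp \<sigma> a"
      using P_imp_Q[OF monoT0 T0(2) T0(1)] g by (smt (verit))
    have a1: "a < 1" using a g by (smt (verit) mult_le_cancel_left1)
    have Q: "Qp ?w (a / (1 - a))" using lemA[OF nonneg mono lim fin a(3) a(1) a1] .
    have "a / (1 - a) * g < 1" using a a1 by (simp add: field_simps)
    then show "P_prop ?w g" using Q_imp_P[OF Q] a a1 g by simp
  qed
  have xm: "x - 1 \<in> S2" using xS x1' equiv[of "x - 1"] unfolding S1_def S2_def by simp
  then have ne: "S2 \<noteq> {}" by auto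
  have g2: "gamma_idx ?w = Sup (ereal ` S2)" unfolding gamma_idx_def S2_def using xm S2_def by auto
  have le1: "Sup (ereal ` S2) + 1 \<le> Sup (ereal ` S1)"
  proof -
    have "Sup (ereal ` S2) + 1 = (SUP y\<in>S2. ereal y + 1)"
      using SUP_ereal_add_left[OF ne, of 1 ereal] by simp
    also have "\<dots> \<le> Sup (ereal ` S1)"
    proof (rule SUP_least)
      fix y assume y: "y \<in> S2"
      then have "y + 1 \<in> S1" using equiv unfolding S1_def S2_def by auto
      then have "ereal (y + 1) \<le> Sup (ereal ` S1)" by (simp add: Sup_upper)
      then show "ereal y + 1 \<le> Sup (ereal ` S1)" by simp
    qed
    finally show ?thesis .
  qed
  have le2: "Sup (ereal ` S1) \<le> Sup (ereal ` S2) + 1"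
  proof (rule Sup_least)
    fix z assume "z \<in> ereal ` S1"
    then obtain y where y: "y \<in> S1" "z = ereal y" by auto
    show "z \<le> Sup (ereal ` S2) + 1"
    proof (cases "y > 1")
      case True
      then have "y - 1 \<in> S2" using y equiv[of "y - 1"] unfolding S1_def S2_def by simp
      then have "ereal (y - 1) \<le> Sup (ereal ` S2)" by (simp add: Sup_upper)
      then have "ereal (y - 1) + 1 \<le> Sup (ereal ` S2) + 1" by (rule add_right_mono)
      then show ?thesis using y by simp
    next
      case False
      have "ereal (x - 1) \<le> Sup (ereal ` S2)" using xm by (simp add: Sup_upper)
      then have "ereal (x - 1) + 1 \<le> Sup (ereal ` S2) + 1" by (rule add_right_mono)
      moreover have "z \<le> ereal (x - 1) + 1" using y False x1' by simp
      ultimately show ?thesis by (rule order_trans[rotated])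
    qed
  qed
  show ?thesis unfolding g1 g2 using le1 le2 by (rule antisym[rotated])
qed

end
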